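(* For every message $M$ and formulas $\phi,\psi$: $\vdash[M]\big([M](\phi\vee\psi)\to([M]\phi\vee[M]\psi)\big)$.
   Context: Fix a finite set $\mathcal{A}$ of agent names containing a distinguished name $\mathsf{CM}$. Messages: $M ::= a \mid B \mid (M,M)$ ($a\in\mathcal{A}$, $B$ optional data constants, pairs). $\mathcal{P}$ is a denumerable set of propositional variables containing atoms $\mathsf{k}_a(M)$ ("$a$ knows $M$"). Formulas: $\phi ::= P \mid \phi\wedge\phi \mid \phi\vee\phi \mid \neg\phi \mid \phi\to\phi \mid [M]\phi$. Abbreviations: $\mathrm{true}:=\mathsf{k}_{\mathsf{CM}}(\mathsf{CM})$, $\mathrm{false}:=\neg\mathrm{true}$, $\phi\leftrightarrow\psi:=(\phi\to\psi)\wedge(\psi\to\phi)$, $\langle M\rangle\phi:=\neg\neg(\mathsf{k}_{\mathsf{CM}}(M)\wedge\phi)$. LIiP is the smallest set of formulas containing all instances of: the axioms of an adequate Hilbert axiomatization of intuitionistic propositional logic; $\mathsf{k}_a(a)$; $(\mathsf{k}_a(M)\wedge\mathsf{k}_a(M'))\leftrightarrow\mathsf{k}_a((M,M'))$; $[M]\mathsf{k}_{\mathsf{CM}}(M)$; $[M](\phi\to\psi)\to([M]\phi\to[M]\psi)$; $[M]\phi\to(\mathsf{k}_{\mathsf{CM}}(M)\to\phi)$; $[M]\phi\to\langle M\rangle\phi$; $\phi\to[M]\phi$; and closed under modus ponens and the rule: if $\mathsf{k}_{\mathsf{CM}}(M)\to\mathsf{k}_{\mathsf{CM}}(M')$ is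 in the set then so is $[M']\phi\to[M]\phi$ for every $\phi$. Write $\vdash\phi$ for $\phi\in\mathrm{LIiP}$. *)

theory Defs
  imports Main
begin

datatype ('a, 'b) msg = Ag 'a | Dat 'b | MPair "('a, 'b) msg" "('a, 'b) msg"

datatype ('a, 'b, 'c) pvar = Kn 'a "('a, 'b) msg" | PV 'c

datatype ('a, 'b, 'c) fm =
    Atom "('a, 'b, 'c) pvar"
  | Conj "('a, 'b, 'c) fm" "('a, 'b, 'c) fm"
  | Disj "('a, 'b, 'c) fm" "('a, 'b, 'c) fm"
  | Neg "('a, 'b, 'c) fm"
  | Imp "('a, 'b, 'c) fm" "('a, 'b, 'c) fm"
  | Box "('a, 'b) msg" "('a, 'b, 'c) fm"

abbreviation k :: "'a \<Rightarrow> ('a, 'b) msg \<Rightarrow> ('a, 'b, 'c) fm" where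
  "k a M \<equiv> Atom (Kn a M)"

definition Tru :: "'a \<Rightarrow> ('a, 'b, 'c) fm" where
  "Tru CM = k CM (Ag CM)"

definition Fls :: "'a \<Rightarrow> ('a, 'b, 'c) fm" where
  "Fls CM = Neg (Tru CM)"

definition Iff :: "('a, 'b, 'c) fm \<Rightarrow> ('a, 'b, 'c) fm \<Rightarrow> ('a, 'b, 'c) fm" where
  "Iff p q = Conj (Imp p q) (Imp q p)"

definition Dia :: "'a \<Rightarrow> ('a, 'b) msg \<Rightarrow> ('a, 'b, 'c) fm \<Rightarrow> ('a, 'b, 'c) fm" where
  "Dia CM M p = Neg (Neg (Conj (k CM M) p))"

(* LIiP, parametrised by the distinguished agent CM.
   Intuitionistic propositional part: Kleene's Hilbert system (negation primitive). *)
inductive LIiP :: "'a::finite \<Rightarrow> ('a, 'b, 'c) fm \<Rightarrow> bool" for CM :: "'a::finite" where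
  ax_K: "LIiP CM (Imp p (Imp q p))"
| ax_S: "LIiP CM (Imp (Imp p q) (Imp (Imp p (Imp q r)) (Imp p r)))"
| ax_conjI: "LIiP CM (Imp p (Imp q (Conj p q)))"
| ax_conjE1: "LIiP CM (Imp (Conj p q) p)"
| ax_conjE2: "LIiP CM (Imp (Conj p q) q)"
| ax_disjI1: "LIiP CM (Imp p (Disj p q))"
| ax_disjI2: "LIiP CM (Imp q (Disj p q))"
| ax_disjE: "LIiP CM (Imp (Imp p r) (Imp (Imp q r) (Imp (Disj p q) r)))"
| ax_negI: "LIiP CM (Imp (Imp p q) (Imp (Imp p (Neg q)) (Neg p)))"
| ax_negE: "LIiP CM (Imp (Neg p) (Imp p q))"
| ax_self: "LIiP CM (k a (Ag a))"
| ax_pair: "LIiP CM (Iff (Conj (k a M) (k a M')) (k a (MPair M M')))"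
| ax_knows: "LIiP CM (Box M (k CM M))"
| ax_boxK: "LIiP CM (Imp (Box M (Imp p q)) (Imp (Box M p) (Box M q)))"
| ax_boxT: "LIiP CM (Imp (Box M p) (Imp (k CM M) p))"
| ax_boxD: "LIiP CM (Imp (Box M p) (Dia CM M p))"
| ax_boxI: "LIiP CM (Imp p (Box M p))"
| mp: "LIiP CM (Imp p q) \<Longrightarrow> LIiP CM p \<Longrightarrow> LIiP CM q"
| mono: "LIiP CM (Imp (k CM M) (k CM M')) \<Longrightarrow> LIiP CM (Imp (Box M' p) (Box M p))"

end

theory Submission
  imports Defs
begin

inductive ded :: "'a::finite \<Rightarrow> ('a, 'b, 'c) fm list \<Rightarrow> ('a, 'b, 'c) fm \<Rightarrow> bool" for CM :: "'a::finite" where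
  dax: "LIiP CM p \<Longrightarrow> ded CM G p"
| dhyp: "p \<in> set G \<Longrightarrow> ded CM G p"
| dmp: "ded CM G (Imp p q) \<Longrightarrow> ded CM G p \<Longrightarrow> ded CM G q"

lemma ded_nil: "ded CM G p \<Longrightarrow> G = [] \<Longrightarrow> LIiP CM p"
  by (induction rule: ded.induct) (auto intro: LIiP.mp)

lemma imp_refl: "LIiP CM (Imp A A)"
proof -
  have 1: "LIiP CM (Imp (Imp A (Imp A A)) (Imp (Imp A (Imp (Imp A A) A)) (Imp A A)))"
    by (rule ax_S)
  have 2: "LIiP CM (Imp A (Imp A A))" by (rule ax_K)
  have 3: "LIiP CM (Imp A (Imp (Imp A A) A))" by (rule ax_K)
  show ?thesis using LIiP.mp[OF LIiP.mp[OF 1 2] 3] .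
qed

lemma deduction: "ded CM G B \<Longrightarrow> G = A # G' \<Longrightarrow> ded CM G' (Imp A B)"
proof (induction rule: ded.induct)
  case (dax p G)
  then show ?case using ded.dmp[OF ded.dax[OF ax_K[where p=p and q=A]] ded.dax[OF dax.hyps]] by blast
next
  case (dhyp p G)
  show ?case
  proof (cases "p = A")
    case True then show ?thesis using dax[OF imp_refl] by simp
  next
    case False
    then have "p \<in> set G'" using dhyp by auto
    then show ?thesis using dmp[OF dax[OF ax_K] ded.dhyp] by blast
  qed
next
  case (dmp G p q)
  then have a: "ded CM G' (Imp A (Imp p q))" and b: "ded CM G' (Imp A p)" by auto
  show ?case using ded.dmp[OF ded.dmp[OF dax[OF ax_S] b] a] .
qed

lemma boxI2: "ded CM G (Imp (k CM M) X) \<Longrightarrow> ded CM G (Box M X)"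
proof -
  assume h: "ded CM G (Imp (k CM M) X)"
  have "ded CM G (Box M (Imp (k CM M) X))" using dmp[OF dax[OF ax_boxI] h] .
  then have "ded CM G (Imp (Box M (k CM M)) (Box M X))" using dmp[OF dax[OF ax_boxK]] by blast
  then show ?thesis using dmp[OF _ dax[OF ax_knows]] by blast
qed

lemma boxE: "ded CM G (Box M X) \<Longrightarrow> ded CM G (k CM M) \<Longrightarrow> ded CM G X"
  using dmp[OF dmp[OF dax[OF ax_boxT]]] by blast

lemma disj_part: "LIiP CM (Imp \<phi> (Disj (Box M \<phi>) (Box M \<psi>)))"
proof -
  have "ded CM [\<phi>] (Disj (Box M \<phi>) (Box M \<psi>))"
    using dmp[OF dax[OF ax_disjI1] dmp[OF dax[OF ax_boxI] dhyp[of \<phi> "[\<phi>]"]]] by simp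
  then show ?thesis using deduction ded_nil by blast
qed

lemma disj_part2: "LIiP CM (Imp \<psi> (Disj (Box M \<phi>) (Box M \<psi>)))"
proof -
  have "ded CM [\<psi>] (Disj (Box M \<phi>) (Box M \<psi>))"
    using dmp[OF dax[OF ax_disjI2] dmp[OF dax[OF ax_boxI] dhyp[of \<psi> "[\<psi>]"]]] by simp
  then show ?thesis using deduction ded_nil by blast
qed

theorem theorem2p41:
  fixes CM :: "'a::finite" and M :: "('a, 'b) msg" and \<phi> \<psi> :: "('a, 'b, 'c) fm"
  shows "LIiP CM (Box M (Imp (Box M (Disj \<phi> \<psi>)) (Disj (Box M \<phi>) (Box M \<psi>))))"
proof -
  let ?G = "[Box M (Disj \<phi> \<psi>), k CM M]"
  have d: "ded CM ?G (Disj \<phi> \<psi>)" by (rule boxE[OF dhyp dhyp]) auto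
  have "ded CM ?G (Disj (Box M \<phi>) (Box M \<psi>))"
    using dmp[OF dmp[OF dmp[OF dax[OF ax_disjE] dax[OF disj_part]] dax[OF disj_part2]] d] .
  then have "ded CM [k CM M] (Imp (Box M (Disj \<phi> \<psi>)) (Disj (Box M \<phi>) (Box M \<psi>)))"
    using deduction by blast
  then have "ded CM [] (Imp (k CM M) (Imp (Box M (Disj \<phi> \<psi>)) (Disj (Box M \<phi>) (Box M \<psi>))))"
    using deduction by blast
  then have "ded CM [] (Box M (Imp (Box M (Disj \<phi> \<psi>)) (Disj (Box M \<phi>) (Box M \<psi>))))"
    by (rule boxI2)
  then show ?thesis using ded_nil by blast
qed

end
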